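(* Let $n$ be a positive integer, let $X$ be a random variable uniformly distributed in the unit ball $\mathbf{B}^n=\{x\in\mathbf{R}^n:\|x\|\le1\}$, and let $U$ be a unit vector chosen uniformly at random on the unit sphere of $\mathbf{R}^n$, independently of $X$. Consider the straight line unit-speed path $t\mapsto X+tU$, $t\ge0$, and its escape time $T=\inf\{t\ge0: X+tU\notin\operatorname{int}(\mathbf{B}^n)\}$. Then \[ \mathbb{E}[T]=\frac{2}{\sqrt{\pi}}\,\frac{\Gamma\bigl(\frac{n+2}{2}\bigr)}{\Gamma\bigl(\frac{n+3}{2}\bigr)}. \]
   Context: $\|\cdot\|$ is the Euclidean norm and $\Gamma$ is the Euler gamma function. Equivalently, $\mathbb{E}[T]$ is the expected straight-line distance from a uniformly random point of the unit ball to its boundary in a uniformly random direction. *)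

theory Defs
  imports "HOL-Probability.Probability"
begin

definition uniform_ball :: "'a::euclidean_space measure" where
  "uniform_ball = uniform_measure lborel (cball 0 1)"

text \<open>Uniform (normalised surface) distribution on the unit sphere, defined in the standard
  way as the cone measure: the image of the uniform distribution on the ball under radial
  projection y \<mapsto> y / |y| (the origin is a null set).\<close>
definition uniform_sphere :: "'a::euclidean_space measure" where
  "uniform_sphere = distr uniform_ball borel (\<lambda>y. y /\<^sub>R norm y)"

definition escape_time :: "'a::euclidean_space \<Rightarrow> 'a \<Rightarrow> real" where
  "escape_time x u = Inf {t. t \<ge> 0 \<and> x + t *\<^sub>R u \<notin> ball 0 1}"

end

theory Submission
  imports Defs
begin


lemma iso_null:
  fixes H :: "'a::euclidean_space \<Rightarrow> 'a"
  assumes lin: "linear H" and iso: "\<And>x. norm (H x) = norm x"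
    and N: "negligible N" "N \<in> sets borel" "H ` N \<in> sets borel"
  shows "N \<in> null_sets lborel" "H ` N \<in> null_sets lborel"
proof -
  have "negligible (H ` N)"
  proof (rule negligible_locally_Lipschitz_image[OF _ N(1)])
    fix x assume "x \<in> N"
    show "\<exists>T B. open T \<and> x \<in> T \<and> (\<forall>y\<in>N \<inter> T. norm (H y - H x) \<le> B * norm (y - x))"
      by (rule exI[of _ UNIV], rule exI[of _ 1]) (simp add: linear_diff[OF lin, symmetric] iso)
  qed simp
  then show "N \<in> null_sets lborel" "H ` N \<in> null_sets lborel"
    using N by (auto simp: negligible_iff_null_sets null_sets_completion_iff)
qed

lemma iso_open_measure:
  fixes H :: "'a::euclidean_space \<Rightarrow> 'a"
  assumes lin: "linear H" and iso: "\<And>x. norm (H x) = norm x" and inv: "\<And>x. H (H x) = x"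
    and S: "open S"
  shows "emeasure lborel (H ` S) = emeasure lborel S"
proof -
  have contH: "continuous_on UNIV H"
    using lin by (simp add: linear_continuous_on linear_linear)
  have Hmeas: "H \<in> borel_measurable borel"
    using contH by (rule borel_measurable_continuous_onI)
  have img: "H ` A = H -` A" for A
    using inv by (auto simp: image_iff) (metis)
  have imgb: "H ` A \<in> sets borel" if "A \<in> sets borel" for A
    using measurable_sets[OF Hmeas that] img[of A] by simp
  have Hball: "H ` ball c r = ball (H c) r" for c r
  proof -
    have "H ` ball c r = H -` ball c r" by (rule img)
    also have "\<dots> = ball (H c) r"
    proof (intro set_eqI iffI)
      fix x assume "x \<in> H -` ball c r"
      then have "dist c (H x) < r" by simp
      then have "norm (H (c - H x)) < r" using iso[of "c - H x"] by (simp add: dist_norm)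
      moreover have "H (c - H x) = H c - x" by (simp add: linear_diff[OF lin] inv)
      ultimately show "x \<in> ball (H c) r" by (simp add: dist_norm)
    next
      fix x assume "x \<in> ball (H c) r"
      then have "norm (H c - x) < r" by (simp add: dist_norm)
      then have "norm (H (H c - x)) < r" using iso[of "H c - x"] by simp
      moreover have "H (H c - x) = c - H x" by (simp add: linear_diff[OF lin] inv)
      ultimately show "x \<in> H -` ball c r" by (simp add: dist_norm)
    qed
    finally show ?thesis .
  qed
  let ?K = "{p::'a \<times> real. 0 < snd p \<and> ball (fst p) (snd p) \<subseteq> S}"
  obtain C where C: "countable C" "C \<subseteq> ?K"
    and pw: "pairwise (\<lambda>i j. disjnt (ball (fst i) (snd i)) (ball (fst j) (snd j))) C"
    and neg: "negligible (S - (\<Union>i\<in>C. ball (fst i) (snd i)))"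
  proof (rule Vitali_covering_theorem_balls[of S ?K fst snd])
    fix x d assume "x \<in> S" "0 < (d::real)"
    then obtain e where e: "e > 0" "ball x e \<subseteq> S" using S open_contains_ball by blast
    show "\<exists>i. i \<in> ?K \<and> x \<in> ball (fst i) (snd i) \<and> snd i < d"
      using e \<open>0 < d\<close> by (intro exI[of _ "(x, min e d / 2)"]) auto
  qed blast
  define U where "U = (\<Union>i\<in>C. ball (fst i) (snd i))"
  define N where "N = S - U"
  have US: "U \<subseteq> S" using C by (auto simp: U_def)
  have Ub: "U \<in> sets borel" unfolding U_def by (rule borel_open) auto
  have Nb: "N \<in> sets borel" unfolding N_def using Ub S by auto
  have SUN: "S = U \<union> N" using US by (auto simp: N_def)
  have HS: "H ` S = H ` U \<union> H ` N" using SUN by auto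
  have nul: "N \<in> null_sets lborel" "H ` N \<in> null_sets lborel"
    using iso_null[OF lin iso _ Nb imgb[OF Nb]] neg by (auto simp: N_def U_def)
  have disj: "disjoint_family_on (\<lambda>i. ball (fst i) (snd i)) C"
    using pw by (auto simp: disjoint_family_on_def pairwise_def disjnt_def)
  have disj2: "disjoint_family_on (\<lambda>i. H ` ball (fst i) (snd i)) C"
  proof -
    have injH: "inj H" by (metis injI inv)
    show ?thesis using disj by (auto simp: disjoint_family_on_def image_Int[OF injH, symmetric])
  qed
  have "emeasure lborel S = emeasure lborel U"
    using SUN emeasure_Un_null_set[OF _ nul(1), of U] Ub by simp
  also have "\<dots> = (\<integral>\<^sup>+i. emeasure lborel (ball (fst i) (snd i)) \<partial>count_space C)"
    unfolding U_def by (rule emeasure_UN_countable) (use C disj in auto)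
  also have "\<dots> = (\<integral>\<^sup>+i. emeasure lborel (H ` ball (fst i) (snd i)) \<partial>count_space C)"
  proof (intro nn_integral_cong)
    fix i assume "i \<in> space (count_space C)"
    then have "snd i \<ge> 0" using C by auto
    then show "emeasure lborel (ball (fst i) (snd i)) = emeasure lborel (H ` ball (fst i) (snd i))"
      unfolding Hball by (simp add: emeasure_ball)
  qed
  also have "\<dots> = emeasure lborel (\<Union>i\<in>C. H ` ball (fst i) (snd i))"
    by (rule emeasure_UN_countable[symmetric]) (use C disj2 imgb in auto)
  also have "(\<Union>i\<in>C. H ` ball (fst i) (snd i)) = H ` U" by (auto simp: U_def)
  also have "emeasure lborel (H ` U) = emeasure lborel (H ` S)"
    using HS emeasure_Un_null_set[of "H ` U" lborel "H ` N"] nul(2) imgb[OF Ub] by simp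
  finally show ?thesis ..
qed

lemma iso_lborel:
  fixes H :: "'a::euclidean_space \<Rightarrow> 'a"
  assumes lin: "linear H" and iso: "\<And>x. norm (H x) = norm x" and inv: "\<And>x. H (H x) = x"
  shows "distr lborel borel H = lborel"
proof -
  have Hmeas: "H \<in> borel_measurable borel"
    using lin by (intro borel_measurable_continuous_onI) (simp add: linear_continuous_on linear_linear)
  have img: "H ` A = H -` A" for A
    using inv by (auto simp: image_iff) (metis)
  show ?thesis
  proof (rule lborel_eqI[symmetric])
    fix l u :: 'a assume "\<And>b. b \<in> Basis \<Longrightarrow> l \<bullet> b \<le> u \<bullet> b"
    show "emeasure (distr lborel borel H) (box l u) = (\<Prod>b\<in>Basis. (u - l) \<bullet> b)"
    proof -
      have "emeasure (distr lborel borel H) (box l u) = emeasure lborel (H ` box l u)"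
        using Hmeas by (simp add: emeasure_distr img[symmetric])
      also have "\<dots> = emeasure lborel (box l u)" by (rule iso_open_measure[OF lin iso inv]) (rule open_box)
      finally show ?thesis using \<open>\<And>b. b \<in> Basis \<Longrightarrow> l \<bullet> b \<le> u \<bullet> b\<close> by simp
    qed
  qed simp
qed



definition hh :: "'a::euclidean_space \<Rightarrow> 'a \<Rightarrow> 'a" where
  "hh v x = x - (2 * (x \<bullet> v) / (v \<bullet> v)) *\<^sub>R v"

lemma hh_linear: "linear (hh v)"
  unfolding hh_def by (intro linearI) (auto simp: inner_add_left algebra_simps add_divide_distrib)

lemma hh_dot: "hh v x \<bullet> v = - (x \<bullet> v)"
proof (cases "v = 0")
  case False
  then have "v \<bullet> v \<noteq> 0" by simp
  then show ?thesis unfolding hh_def by (simp add: inner_diff_left)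
qed (simp add: hh_def)

lemma hh_inner: "hh v x \<bullet> hh v x = x \<bullet> x"
proof -
  define c where "c = 2 * (x \<bullet> v) / (v \<bullet> v)"
  have h: "hh v x = x - c *\<^sub>R v" by (simp add: hh_def c_def)
  have cc: "c * (v \<bullet> v) = 2 * (x \<bullet> v)"
    by (cases "v = 0") (simp_all add: c_def)
  have "hh v x \<bullet> hh v x = x \<bullet> x - 2 * c * (x \<bullet> v) + c * (c * (v \<bullet> v))"
    unfolding h by (simp add: inner_diff_left inner_diff_right inner_commute[of v x] algebra_simps)
  also have "\<dots> = x \<bullet> x" unfolding cc by simp
  finally show ?thesis .
qed

lemma hh_norm: "norm (hh v x) = norm x"
  by (simp add: norm_eq_sqrt_inner hh_inner)

lemma hh_inv: "hh v (hh v x) = x"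
proof -
  have "hh v (hh v x) = hh v x + (2 * (x \<bullet> v) / (v \<bullet> v)) *\<^sub>R v"
    by (simp add: hh_def[of v "hh v x"] hh_dot)
  then show ?thesis by (simp add: hh_def)
qed

lemma hh_map:
  assumes "norm a = norm b"
  shows "hh (a - b) a = b"
proof (cases "a = b")
  case True then show ?thesis by (simp add: hh_def)
next
  case False
  have nn: "a \<bullet> a = b \<bullet> b" using assms by (metis norm_eq)
  have d: "(a - b) \<bullet> (a - b) = 2 * (a \<bullet> (a - b))"
    using nn by (simp add: inner_diff_left inner_diff_right inner_commute)
  have X: "(a - b) \<bullet> (a - b) \<noteq> 0" using False by simp
  have "2 * (a \<bullet> (a - b)) / ((a - b) \<bullet> (a - b)) = ((a - b) \<bullet> (a - b)) / ((a - b) \<bullet> (a - b))"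
    by (simp only: d)
  also have "\<dots> = 1" using X by simp
  finally have r: "2 * (a \<bullet> (a - b)) / ((a - b) \<bullet> (a - b)) = 1" .
  show ?thesis unfolding hh_def r by simp
qed

definition tplus :: "'a::euclidean_space \<Rightarrow> 'a \<Rightarrow> real" where
  "tplus x u = (- (x \<bullet> u) + sqrt ((x \<bullet> u)\<^sup>2 + (u \<bullet> u) * (1 - x \<bullet> x))) / (u \<bullet> u)"

lemma escape_outside:
  assumes "x \<notin> ball 0 1"
  shows "escape_time x u = 0"
proof -
  have "{t. t \<ge> 0 \<and> x + t *\<^sub>R u \<notin> ball 0 1} = {t. t \<ge> 0 \<and> x + t *\<^sub>R u \<notin> ball 0 1}" ..
  show ?thesis unfolding escape_time_def
    by (rule cInf_eq_minimum) (use assms in auto)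
qed

lemma escape_zero:
  assumes "x \<in> ball 0 1"
  shows "escape_time x 0 = Inf {}"
  using assms unfolding escape_time_def by simp

lemma escape_formula:
  assumes x: "norm x < 1" and u: "u \<noteq> 0"
  shows "escape_time x u = tplus x u" "tplus x u > 0"
proof -
  define a where "a = u \<bullet> u"
  define b where "b = x \<bullet> u"
  define c where "c = x \<bullet> x - 1"
  define s where "s = sqrt (b\<^sup>2 - a * c)"
  have a: "a > 0" using u by (simp add: a_def)
  have c: "c < 0" using x by (simp add: c_def norm_eq_sqrt_inner)
  have ac: "a * c < 0" using a c by (simp add: mult_pos_neg)
  have D: "b\<^sup>2 - a * c > b\<^sup>2" using ac by simp
  have D0: "b\<^sup>2 - a * c \<ge> 0" using ac zero_le_power2[of b] by linarith
  then have s2: "s\<^sup>2 = b\<^sup>2 - a * c" unfolding s_def by simp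
  have s0: "s \<ge> 0" using D0 by (simp add: s_def)
  have sb: "s > \<bar>b\<bar>" unfolding s_def using D
    by (metis real_sqrt_abs real_sqrt_less_mono)
  have tp: "tplus x u = (s - b) / a"
    by (simp add: tplus_def s_def a_def b_def c_def algebra_simps)
  show "tplus x u > 0" using tp sb a by simp
  have key: "(x + t *\<^sub>R u \<notin> ball 0 1) \<longleftrightarrow> t \<ge> (s - b) / a" if t: "t \<ge> 0" for t
  proof -
    have "(x + t *\<^sub>R u \<notin> ball 0 1) \<longleftrightarrow> (x + t *\<^sub>R u) \<bullet> (x + t *\<^sub>R u) \<ge> 1"
      by (simp add: norm_eq_sqrt_inner not_less)
    also have "(x + t *\<^sub>R u) \<bullet> (x + t *\<^sub>R u) = a * t\<^sup>2 + 2 * b * t + c + 1"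
      by (simp add: a_def b_def c_def inner_add_left inner_add_right inner_commute power2_eq_square algebra_simps)
    also have "(1 \<le> a * t\<^sup>2 + 2 * b * t + c + 1) \<longleftrightarrow> 0 \<le> (a * t + b - s) * (a * t + b + s)"
    proof -
      have "(a * t + b - s) * (a * t + b + s) = a * (a * t\<^sup>2 + 2 * b * t + c)"
        using s2 by (simp add: algebra_simps power2_eq_square)
      then show ?thesis using a by (simp add: zero_le_mult_iff)
    qed
    also have "\<dots> \<longleftrightarrow> 0 \<le> a * t + b - s"
    proof -
      have "a * t + b + s > 0" using a t sb by (smt (verit) mult_nonneg_nonneg)
      then show ?thesis by (simp add: zero_le_mult_iff)
    qed
    also have "\<dots> \<longleftrightarrow> t \<ge> (s - b) / a" using a by (simp add: field_simps)
    finally show ?thesis .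
  qed
  have "(s - b) / a \<ge> 0" using a sb by simp
  then have "{t. t \<ge> 0 \<and> x + t *\<^sub>R u \<notin> ball 0 1} = {(s - b) / a..}"
  proof (intro set_eqI iffI)
    fix t assume "t \<in> {t. t \<ge> 0 \<and> x + t *\<^sub>R u \<notin> ball 0 1}"
    then show "t \<in> {(s - b) / a..}" using key by auto
  next
    fix t assume t: "t \<in> {(s - b) / a..}"
    then have "t \<ge> 0" using \<open>(s - b) / a \<ge> 0\<close> by auto
    then show "t \<in> {t. t \<ge> 0 \<and> x + t *\<^sub>R u \<notin> ball 0 1}" using key[of t] t by auto
  qed
  then show "escape_time x u = tplus x u" unfolding escape_time_def tp by simp
qed

definition esc' :: "'a::euclidean_space \<Rightarrow> 'a \<Rightarrow> real" where
  "esc' x u = (if norm x < 1 then (if norm u = 0 then Inf {} else tplus x u) else 0)"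

lemma escape_eq: "escape_time x u = esc' x u"
  by (auto simp: esc'_def escape_outside escape_zero escape_formula)

lemma escape_measurable[measurable]:
  "(\<lambda>p. escape_time (fst p) (snd p)) \<in> borel_measurable (borel \<Otimes>\<^sub>M borel :: ('a::euclidean_space \<times> 'a) measure)"
  unfolding escape_eq esc'_def tplus_def by measurable

lemma escape_nonneg: "u \<noteq> 0 \<Longrightarrow> escape_time x u \<ge> 0"
proof (cases "norm x < 1")
  case True
  assume "u \<noteq> 0"
  then show ?thesis using escape_formula[OF True] by (simp add: less_imp_le)
qed (simp add: escape_outside)

lemma escape_iso:
  fixes H :: "'a::euclidean_space \<Rightarrow> 'a"
  assumes lin: "linear H" and iso: "\<And>x. norm (H x) = norm x"
  shows "escape_time (H x) (H v) = escape_time x v"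
proof -
  have "H x + t *\<^sub>R H v = H (x + t *\<^sub>R v)" for t
    by (simp add: linear_add[OF lin] linear_scale[OF lin])
  then show ?thesis unfolding escape_time_def by (simp add: iso)
qed

lemma integral_invariant:
  fixes u e :: "'a::euclidean_space"
  assumes "norm u = 1" "norm e = 1"
  shows "(\<integral>\<^sup>+x. ennreal (escape_time x u) \<partial>lborel) = (\<integral>\<^sup>+x. ennreal (escape_time x e) \<partial>lborel)"
proof -
  define H where "H = hh (e - u)"
  have lin: "linear H" and iso: "\<And>x. norm (H x) = norm x" and inv: "\<And>x. H (H x) = x"
    by (simp_all add: H_def hh_linear hh_norm hh_inv)
  have He: "H e = u" using assms by (simp add: H_def hh_map)
  have meas: "(\<lambda>x. ennreal (escape_time x e)) \<in> borel_measurable borel"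
  proof -
    have "(\<lambda>x. escape_time x e) \<in> borel_measurable borel"
      using measurable_Pair1[OF escape_measurable, of e] by simp
    then show ?thesis by measurable
  qed
  have Hmeas: "H \<in> borel_measurable borel"
    using lin by (intro borel_measurable_continuous_onI) (simp add: linear_continuous_on linear_linear)
  have "(\<integral>\<^sup>+x. ennreal (escape_time x u) \<partial>lborel) = (\<integral>\<^sup>+x. ennreal (escape_time (H x) e) \<partial>lborel)"
    by (intro nn_integral_cong) (metis He inv escape_iso[OF lin iso])
  also have "\<dots> = (\<integral>\<^sup>+x. ennreal (escape_time x e) \<partial>distr lborel borel H)"
    by (rule nn_integral_distr[symmetric]) (use Hmeas meas in auto)
  also have "distr lborel borel H = lborel" by (rule iso_lborel[OF lin iso inv])
  finally show ?thesis .
qed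



lemma infinite_euclidean: "infinite (UNIV :: 'a::euclidean_space set)"
proof
  assume fin: "finite (UNIV::'a set)"
  obtain e :: 'a where e: "e \<in> Basis" using nonempty_Basis by blast
  then have "e \<noteq> 0" by auto
  then have inj: "inj_on (\<lambda>r::real. r *\<^sub>R e) UNIV" by (auto intro!: inj_onI)
  have "finite (UNIV::real set)" using finite_imageD[OF finite_subset[OF subset_UNIV fin] inj] .
  then show False using infinite_UNIV_char_0 by blast
qed

lemma inner1D:
  fixes r :: real assumes r: "r \<ge> 0"
  shows "(\<integral>\<^sup>+y. ennreal (if r + y\<^sup>2 < 1 then sqrt (1 - r) - y else 0) \<partial>lborel)
       = ennreal (if r < 1 then 2 * (1 - r) else 0)"
proof (cases "r < 1")
  case True
  define h where "h = sqrt (1 - r)"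
  have h: "h > 0" "h\<^sup>2 = 1 - r" using True by (simp_all add: h_def)
  have iff: "r + y\<^sup>2 < 1 \<longleftrightarrow> -h < y \<and> y < h" for y
  proof -
    have "r + y\<^sup>2 < 1 \<longleftrightarrow> y\<^sup>2 < h\<^sup>2" using h by linarith
    also have "\<dots> \<longleftrightarrow> \<bar>y\<bar> < h" by (metis real_sqrt_abs real_sqrt_less_iff abs_of_pos h(1))
    finally show ?thesis by linarith
  qed
  have "AE y in lborel. ennreal (if r + y\<^sup>2 < 1 then sqrt (1 - r) - y else 0)
          = ennreal (h - y) * indicator {-h..h} y"
    using AE_lborel_singleton[of h] AE_lborel_singleton[of "-h"]
  proof eventually_elim
    case (elim y)
    then show ?case by (auto simp: iff h_def[symmetric] indicator_def)
  qed
  then have "(\<integral>\<^sup>+y. ennreal (if r + y\<^sup>2 < 1 then sqrt (1 - r) - y else 0) \<partial>lborel)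
      = (\<integral>\<^sup>+y. ennreal (h - y) * indicator {-h..h} y \<partial>lborel)"
    by (rule nn_integral_cong_AE)
  also have "\<dots> = ennreal (2 * h\<^sup>2)"
  proof (rule nn_integral_has_integral_lebesgue')
    show "\<And>x. x \<in> {-h..h} \<Longrightarrow> 0 \<le> h - x" by simp
    have "((\<lambda>y. h - y) has_integral ((h * h - h\<^sup>2 / 2) - (h * (-h) - (-h)\<^sup>2 / 2))) {-h..h}"
      by (rule fundamental_theorem_of_calculus)
         (use h in \<open>auto intro!: derivative_eq_intros simp: has_real_derivative_iff_has_vector_derivative[symmetric]\<close>)
    then show "((\<lambda>y. h - y) has_integral 2 * h\<^sup>2) {-h..h}"
      by (simp add: power2_eq_square algebra_simps)
  qed
  finally show ?thesis using h True by simp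
next
  case False
  then have "\<And>y. \<not> r + y\<^sup>2 < 1" by (smt (verit) zero_le_power2)
  then show ?thesis using False by simp
qed

lemma disc_measure:
  fixes J :: "'i set"
  assumes J: "finite J" "J \<noteq> {}"
  shows "emeasure (Pi\<^sub>M J (\<lambda>_. lborel)) ({g. sqrt (\<Sum>b\<in>J. (g b)\<^sup>2) \<le> s} \<inter> space (Pi\<^sub>M J (\<lambda>_. lborel)))
     = ennreal (if s > 0 then unit_ball_vol (real (card J)) * s ^ card J else 0)"
proof -
  consider "s > 0" | "s = 0" | "s < 0" by linarith
  then show ?thesis
  proof cases
    case 1 then show ?thesis using emeasure_cball_aux[OF J(1) 1] by simp
  next
    case 2
    have "{g. sqrt (\<Sum>b\<in>J. (g b)\<^sup>2) \<le> s} \<inter> space (Pi\<^sub>M J (\<lambda>_. lborel)) = PiE J (\<lambda>_. {0::real})"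
    proof (intro set_eqI iffI)
      fix g assume g: "g \<in> {g. sqrt (\<Sum>b\<in>J. (g b)\<^sup>2) \<le> s} \<inter> space (Pi\<^sub>M J (\<lambda>_. lborel))"
      then have "(\<Sum>b\<in>J. (g b)\<^sup>2) \<le> 0" using 2 by simp
      moreover have "(\<Sum>b\<in>J. (g b)\<^sup>2) \<ge> 0" by (simp add: sum_nonneg)
      ultimately have "(\<Sum>b\<in>J. (g b)\<^sup>2) = 0" by linarith
      then have "\<forall>b\<in>J. g b = 0" using J by (simp add: sum_nonneg_eq_0_iff)
      then show "g \<in> PiE J (\<lambda>_. {0::real})" using g by (auto simp: space_PiM PiE_def extensional_def fun_eq_iff)
    next
      fix g assume "g \<in> PiE J (\<lambda>_. {0::real})"
      then show "g \<in> {g. sqrt (\<Sum>b\<in>J. (g b)\<^sup>2) \<le> s} \<inter> space (Pi\<^sub>M J (\<lambda>_. lborel))"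
        using 2 by (auto simp: space_PiM PiE_def)
    qed
    moreover have "emeasure (Pi\<^sub>M J (\<lambda>_. lborel)) (PiE J (\<lambda>_. {0::real})) = 0"
    proof -
      interpret product_sigma_finite "\<lambda>_::'i. lborel::real measure" by standard
      show ?thesis using J by (subst emeasure_PiM) auto
    qed
    ultimately show ?thesis using 2 by simp
  next
    case 3
    have "{g. sqrt (\<Sum>b\<in>J. (g b)\<^sup>2) \<le> s} = {}"
      using 3 by (auto simp: not_le) (smt (verit) real_sqrt_ge_zero sum_nonneg zero_le_power2)
    then show ?thesis using 3 by simp
  qed
qed



lemma fold_ball:
  fixes A :: "'i set"
  assumes A: "finite A" and ij: "i \<notin> A" "j \<notin> A" "i \<noteq> j"
  shows "(\<integral>\<^sup>+f. ennreal (pi * (if (\<Sum>b\<in>A. (f b)\<^sup>2) < 1 then 1 - (\<Sum>b\<in>A. (f b)\<^sup>2) else 0))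
            \<partial>Pi\<^sub>M A (\<lambda>_. lborel)) = ennreal (unit_ball_vol (real (card A + 2)))"
proof -
  interpret product_sigma_finite "\<lambda>_::'i. lborel::real measure" by standard
  define J where "J = {i, j}"
  have J: "finite J" "J \<noteq> {}" "card J = 2" using ij by (auto simp: J_def)
  have dis: "A \<inter> J = {}" using ij by (auto simp: J_def)
  have cardAJ: "card (A \<union> J) = card A + 2" using A J dis by (simp add: card_Un_disjoint)
  define B where "B = {f. sqrt (\<Sum>b\<in>A \<union> J. (f b)\<^sup>2) \<le> 1} \<inter> space (Pi\<^sub>M (A \<union> J) (\<lambda>_. lborel))"
  have Bs: "B \<in> sets (Pi\<^sub>M (A \<union> J) (\<lambda>_. lborel))" unfolding B_def using A J by measurable
  have "ennreal (unit_ball_vol (real (card A + 2))) = emeasure (Pi\<^sub>M (A \<union> J) (\<lambda>_. lborel)) B"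
    unfolding B_def using emeasure_cball_aux[of "A \<union> J" 1] A J cardAJ by simp
  also have "\<dots> = (\<integral>\<^sup>+f. indicator B f \<partial>Pi\<^sub>M (A \<union> J) (\<lambda>_. lborel))"
    using Bs by simp
  also have "\<dots> = (\<integral>\<^sup>+f. (\<integral>\<^sup>+g. indicator B (merge A J (f, g)) \<partial>Pi\<^sub>M J (\<lambda>_. lborel)) \<partial>Pi\<^sub>M A (\<lambda>_. lborel))"
    by (rule product_nn_integral_fold) (use dis A J Bs in auto)
  also have "\<dots> = (\<integral>\<^sup>+f. ennreal (pi * (if (\<Sum>b\<in>A. (f b)\<^sup>2) < 1 then 1 - (\<Sum>b\<in>A. (f b)\<^sup>2) else 0))
            \<partial>Pi\<^sub>M A (\<lambda>_. lborel))"
  proof (intro nn_integral_cong)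
    fix f :: "'i \<Rightarrow> real" assume f: "f \<in> space (Pi\<^sub>M A (\<lambda>_. lborel))"
    define r where "r = (\<Sum>b\<in>A. (f b)\<^sup>2)"
    define D where "D = {g. sqrt (\<Sum>b\<in>J. (g b)\<^sup>2) \<le> sqrt (1 - r)} \<inter> space (Pi\<^sub>M J (\<lambda>_. lborel))"
    have "(\<integral>\<^sup>+g. indicator B (merge A J (f, g)) \<partial>Pi\<^sub>M J (\<lambda>_. lborel))
        = (\<integral>\<^sup>+g. indicator D g \<partial>Pi\<^sub>M J (\<lambda>_. lborel))"
    proof (intro nn_integral_cong)
      fix g :: "'i \<Rightarrow> real" assume g: "g \<in> space (Pi\<^sub>M J (\<lambda>_. lborel))"
      have sp: "merge A J (f, g) \<in> space (Pi\<^sub>M (A \<union> J) (\<lambda>_. lborel))"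
        using f g by (auto simp: space_PiM PiE_def)
      have sm: "(\<Sum>b\<in>A \<union> J. (merge A J (f, g) b)\<^sup>2) = r + (\<Sum>b\<in>J. (g b)\<^sup>2)"
      proof -
        have dis': "\<And>x. x \<in> J \<Longrightarrow> x \<notin> A" using dis by blast
        show ?thesis unfolding r_def using A J dis
          by (subst sum.union_disjoint) (auto intro!: sum.cong simp: merge_def dis')
      qed
      have q: "(\<Sum>b\<in>J. (g b)\<^sup>2) \<ge> 0" by (simp add: sum_nonneg)
      have r0: "r \<ge> 0" by (simp add: r_def sum_nonneg)
      have "sqrt (r + (\<Sum>b\<in>J. (g b)\<^sup>2)) \<le> 1 \<longleftrightarrow> sqrt (\<Sum>b\<in>J. (g b)\<^sup>2) \<le> sqrt (1 - r)"
        by (simp add: real_sqrt_le_iff) (smt (verit) q r0)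
      then show "indicator B (merge A J (f, g)) = (indicator D g :: ennreal)"
        using sp g sm by (simp add: B_def D_def indicator_def)
    qed
    also have "\<dots> = emeasure (Pi\<^sub>M J (\<lambda>_. lborel)) D"
      by (rule nn_integral_indicator) (unfold D_def, use J in measurable)
    also have "\<dots> = ennreal (if sqrt (1 - r) > 0 then unit_ball_vol (real (card J)) * sqrt (1 - r) ^ card J else 0)"
      unfolding D_def by (rule disc_measure[OF J(1,2)])
    also have "\<dots> = ennreal (pi * (if r < 1 then 1 - r else 0))"
    proof -
      have "Gamma (2::real) = 1" using Gamma_fact[of 1, where 'a=real] by (simp add: numeral_2_eq_2)
      then show ?thesis using J(3) by (simp add: unit_ball_vol_def)
    qed
    finally show "(\<integral>\<^sup>+g. indicator B (merge A J (f, g)) \<partial>Pi\<^sub>M J (\<lambda>_. lborel))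
        = ennreal (pi * (if (\<Sum>b\<in>A. (f b)\<^sup>2) < 1 then 1 - (\<Sum>b\<in>A. (f b)\<^sup>2) else 0))"
      by (simp add: r_def)
  qed
  finally show ?thesis ..
qed



lemma slice:
  fixes e :: "'a::euclidean_space"
  assumes e: "e \<in> Basis"
  shows "(\<integral>\<^sup>+x. ennreal (escape_time x e) \<partial>lborel) = ennreal (2 * unit_ball_vol (real DIM('a) + 1) / pi)"
proof -
  interpret product_sigma_finite "\<lambda>_::'a. lborel::real measure" by standard
  define A where "A = Basis - {e}"
  have A: "finite A" "e \<notin> A" "Basis = insert e A" using e by (auto simp: A_def)
  have cardA: "card A + 2 = DIM('a) + 1" using A e by (metis card_insert_disjoint add_2_eq_Suc' Suc_eq_plus1)
  have meas_phi: "(\<lambda>x. ennreal (escape_time x e)) \<in> borel_measurable borel"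
  proof -
    have "(\<lambda>x. escape_time x e) \<in> borel_measurable borel"
      using measurable_Pair1[OF escape_measurable, of e] by simp
    then show ?thesis by measurable
  qed
  have L: "(lborel::'a measure) = distr (Pi\<^sub>M Basis (\<lambda>_. lborel)) borel (\<lambda>f. \<Sum>b\<in>Basis. f b *\<^sub>R b)"
    by (rule lborel_eq)
  have ms: "(\<lambda>f. \<Sum>b\<in>Basis. f b *\<^sub>R b :: 'a) \<in> borel_measurable (Pi\<^sub>M Basis (\<lambda>_. lborel))"
    by measurable
  define r where "r f = (\<Sum>b\<in>A. (f b)\<^sup>2)" for f :: "'a \<Rightarrow> real"
  have "(\<integral>\<^sup>+x. ennreal (escape_time x e) \<partial>lborel)
      = (\<integral>\<^sup>+f. ennreal (escape_time (\<Sum>b\<in>Basis. f b *\<^sub>R b) e) \<partial>Pi\<^sub>M Basis (\<lambda>_. lborel))"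
    unfolding L by (rule nn_integral_distr) (use ms meas_phi in auto)
  also have "\<dots> = (\<integral>\<^sup>+f. ennreal (escape_time (\<Sum>b\<in>Basis. f b *\<^sub>R b) e) \<partial>Pi\<^sub>M (insert e A) (\<lambda>_. lborel))"
    using A by simp
  also have "\<dots> = (\<integral>\<^sup>+f. (\<integral>\<^sup>+y. ennreal (escape_time (\<Sum>b\<in>Basis. (f(e := y)) b *\<^sub>R b) e) \<partial>lborel)
                   \<partial>Pi\<^sub>M A (\<lambda>_. lborel))"
  proof (rule product_nn_integral_insert[OF A(1,2)])
    show "(\<lambda>f. ennreal (escape_time (\<Sum>b\<in>Basis. f b *\<^sub>R b) e)) \<in> borel_measurable (Pi\<^sub>M (insert e A) (\<lambda>_. lborel))"
      using measurable_comp[OF ms meas_phi] A(3) by (simp add: comp_def)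
  qed
  also have "\<dots> = (\<integral>\<^sup>+f. ennreal 2 * ennreal (if r f < 1 then 1 - r f else 0) \<partial>Pi\<^sub>M A (\<lambda>_. lborel))"
  proof (intro nn_integral_cong)
    fix f :: "'a \<Rightarrow> real"
    have r0: "r f \<ge> 0" by (simp add: r_def sum_nonneg)
    have pt: "escape_time (\<Sum>b\<in>Basis. (f(e := y)) b *\<^sub>R b) e
        = (if r f + y\<^sup>2 < 1 then sqrt (1 - r f) - y else 0)" for y
    proof -
      define z where "z = (\<Sum>b\<in>Basis. (f(e := y)) b *\<^sub>R b)"
      have zc: "z \<bullet> c = (f(e := y)) c" if "c \<in> Basis" for c
        unfolding z_def using that by simp
      have ze: "z \<bullet> e = y" using zc[OF e] by simp
      have "z \<bullet> z = (\<Sum>c\<in>Basis. (z \<bullet> c) * (z \<bullet> c))" by (rule euclidean_inner)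
      also have "\<dots> = (\<Sum>c\<in>insert e A. ((f(e := y)) c)\<^sup>2)"
        using A(3) zc by (simp add: power2_eq_square)
      also have "\<dots> = y\<^sup>2 + r f"
        using A(1,2) by (auto simp: r_def intro!: sum.cong)
      finally have zz: "z \<bullet> z = y\<^sup>2 + r f" .
      have ee: "e \<bullet> e = 1" using e by simp
      have "norm z < 1 \<longleftrightarrow> r f + y\<^sup>2 < 1"
        using zz by (simp add: norm_eq_sqrt_inner add.commute)
      moreover have "norm e \<noteq> 0" using e by auto
      moreover have "tplus z e = sqrt (1 - r f) - y"
        unfolding tplus_def ze ee zz by simp
      ultimately show ?thesis unfolding z_def[symmetric] escape_eq esc'_def by simp
    qed
    show "(\<integral>\<^sup>+y. ennreal (escape_time (\<Sum>b\<in>Basis. (f(e := y)) b *\<^sub>R b) e) \<partial>lborel)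
        = ennreal 2 * ennreal (if r f < 1 then 1 - r f else 0)"
    proof (cases "r f < 1")
      case True
      have "ennreal (2 * (1 - r f)) = ennreal 2 * ennreal (1 - r f)"
        by (rule ennreal_mult) (use True in auto)
      then show ?thesis unfolding pt inner1D[OF r0] using True by simp
    next
      case False
      then show ?thesis unfolding pt inner1D[OF r0] by simp
    qed
  qed
  also have "\<dots> = ennreal 2 * (\<integral>\<^sup>+f. ennreal (if r f < 1 then 1 - r f else 0) \<partial>Pi\<^sub>M A (\<lambda>_. lborel))"
    by (rule nn_integral_cmult) (unfold r_def, use A in measurable)
  also have "(\<integral>\<^sup>+f. ennreal (if r f < 1 then 1 - r f else 0) \<partial>Pi\<^sub>M A (\<lambda>_. lborel))
      = ennreal (unit_ball_vol (real DIM('a) + 1) / pi)"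
  proof -
    obtain i :: 'a where i: "i \<notin> A" using ex_new_if_finite[OF infinite_euclidean A(1)] by blast
    obtain j :: 'a where j: "j \<notin> insert i A" using ex_new_if_finite[OF infinite_euclidean, of "insert i A"] A(1) by blast
    have "ennreal pi * (\<integral>\<^sup>+f. ennreal (if r f < 1 then 1 - r f else 0) \<partial>Pi\<^sub>M A (\<lambda>_. lborel))
        = (\<integral>\<^sup>+f. ennreal (pi * (if r f < 1 then 1 - r f else 0)) \<partial>Pi\<^sub>M A (\<lambda>_. lborel))"
      by (subst nn_integral_cmult[symmetric]) (unfold r_def, use A in measurable, simp add: ennreal_mult)
    also have "\<dots> = ennreal (unit_ball_vol (real (card A + 2)))"
      unfolding r_def by (rule fold_ball[of A i j]) (use A i j in auto)
    also have "real (card A + 2) = real DIM('a) + 1" using cardA by simp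
    finally have "ennreal pi * (\<integral>\<^sup>+f. ennreal (if r f < 1 then 1 - r f else 0) \<partial>Pi\<^sub>M A (\<lambda>_. lborel))
        = ennreal (unit_ball_vol (real DIM('a) + 1))" .
    moreover have "ennreal pi * ennreal (unit_ball_vol (real DIM('a) + 1) / pi) = ennreal (unit_ball_vol (real DIM('a) + 1))"
      by (subst ennreal_mult[symmetric]) (auto simp: less_imp_le)
    ultimately have "ennreal pi * (\<integral>\<^sup>+f. ennreal (if r f < 1 then 1 - r f else 0) \<partial>Pi\<^sub>M A (\<lambda>_. lborel))
        = ennreal pi * ennreal (unit_ball_vol (real DIM('a) + 1) / pi)" by simp
    then show ?thesis by (subst (asm) ennreal_mult_cancel_left) auto
  qed
  also have "ennreal 2 * ennreal (unit_ball_vol (real DIM('a) + 1) / pi) = ennreal (2 * unit_ball_vol (real DIM('a) + 1) / pi)"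
  proof -
    have "unit_ball_vol (real DIM('a) + 1) \<ge> 0" by simp
    then have "ennreal (2 * (unit_ball_vol (real DIM('a) + 1) / pi)) = ennreal 2 * ennreal (unit_ball_vol (real DIM('a) + 1) / pi)"
      by (intro ennreal_mult) auto
    then show ?thesis by simp
  qed
  finally show ?thesis .
qed



lemma ball_prob: "prob_space (uniform_ball :: 'a::euclidean_space measure)"
  unfolding uniform_ball_def
proof (rule prob_space_uniform_measure)
  have pos: "unit_ball_vol (real DIM('a)) > 0" by simp
  show "emeasure lborel (cball (0::'a) 1) \<noteq> 0"
    using pos by (simp add: emeasure_cball less_imp_neq[symmetric])
  show "emeasure lborel (cball (0::'a) 1) \<noteq> \<infinity>"
    by (simp add: emeasure_cball)
qed

lemma sets_uniform_ball[simp, measurable_cong]: "sets (uniform_ball :: 'a::euclidean_space measure) = sets borel"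
  by (simp add: uniform_ball_def)

lemma sets_uniform_sphere[simp, measurable_cong]: "sets (uniform_sphere :: 'a::euclidean_space measure) = sets borel"
  by (simp add: uniform_sphere_def)

lemma normalize_measurable[measurable]: "(\<lambda>y::'a::euclidean_space. y /\<^sub>R norm y) \<in> borel_measurable borel"
  by measurable

lemma sphere_prob: "prob_space (uniform_sphere :: 'a::euclidean_space measure)"
  unfolding uniform_sphere_def
  by (rule prob_space.prob_space_distr[OF ball_prob]) (simp add: measurable_cong_sets[OF sets_uniform_ball refl])

lemma AE_sphere: "AE u in (uniform_sphere :: 'a::euclidean_space measure). norm u = 1"
proof -
  have m: "(\<lambda>y::'a. y /\<^sub>R norm y) \<in> measurable uniform_ball borel"
    by (simp add: measurable_cong_sets[OF sets_uniform_ball refl])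
  have "AE y in (uniform_ball :: 'a measure). y \<noteq> 0"
    unfolding uniform_ball_def
    by (rule AE_uniform_measureI) (use AE_lborel_singleton[of 0] in \<open>auto elim: AE_mp\<close>)
  then have "AE y in (uniform_ball :: 'a measure). norm (y /\<^sub>R norm y) = 1"
    by eventually_elim simp
  then show ?thesis unfolding uniform_sphere_def
    by (subst AE_distr_iff[OF m]) auto
qed

lemma ball_integral:
  fixes u :: "'a::euclidean_space"
  assumes u: "norm u = 1"
  shows "(\<integral>\<^sup>+x. ennreal (escape_time x u) \<partial>uniform_ball)
     = ennreal (2 * unit_ball_vol (real DIM('a) + 1) / (pi * unit_ball_vol (real DIM('a))))"
proof -
  obtain e :: 'a where e: "e \<in> Basis" using nonempty_Basis by blast
  have meas: "(\<lambda>x. ennreal (escape_time x u)) \<in> borel_measurable borel"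
  proof -
    have "(\<lambda>x. escape_time x u) \<in> borel_measurable borel"
      using measurable_Pair1[OF escape_measurable, of u] by simp
    then show ?thesis by measurable
  qed
  have "(\<integral>\<^sup>+x. ennreal (escape_time x u) \<partial>uniform_ball)
      = (\<integral>\<^sup>+x. ennreal (escape_time x u) * indicator (cball 0 1) x \<partial>lborel) / emeasure lborel (cball (0::'a) 1)"
    unfolding uniform_ball_def by (rule nn_integral_uniform_measure) (use meas in auto)
  also have "(\<integral>\<^sup>+x. ennreal (escape_time x u) * indicator (cball 0 1) x \<partial>lborel)
      = (\<integral>\<^sup>+x. ennreal (escape_time x u) \<partial>lborel)"
    by (intro nn_integral_cong) (auto simp: indicator_def escape_outside)
  also have "\<dots> = (\<integral>\<^sup>+x. ennreal (escape_time x e) \<partial>lborel)"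
    by (rule integral_invariant) (use u e in auto)
  also have "\<dots> = ennreal (2 * unit_ball_vol (real DIM('a) + 1) / pi)" by (rule slice[OF e])
  also have "emeasure lborel (cball (0::'a) 1) = ennreal (unit_ball_vol (real DIM('a)))"
    by (simp add: emeasure_cball)
  also have "ennreal (2 * unit_ball_vol (real DIM('a) + 1) / pi) / ennreal (unit_ball_vol (real DIM('a)))
      = ennreal (2 * unit_ball_vol (real DIM('a) + 1) / (pi * unit_ball_vol (real DIM('a))))"
    by (subst divide_ennreal) (auto simp: field_simps)
  finally show ?thesis .
qed

lemma final_arith:
  fixes n :: real assumes n: "n \<ge> 0"
  shows "2 * unit_ball_vol (n + 1) / (pi * unit_ball_vol n)
       = 2 / sqrt pi * Gamma ((n + 2) / 2) / Gamma ((n + 3) / 2)"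
proof -
  have p: "pi powr ((n + 1) / 2) = pi powr (n / 2) * sqrt pi"
    by (simp add: powr_add[symmetric] powr_half_sqrt[symmetric] add_divide_distrib)
  have g1: "(n + 2) / 2 = n / 2 + 1" and g2: "(n + 3) / 2 = (n + 1) / 2 + 1" by simp_all
  have "n / 2 \<ge> 0" "(n + 1) / 2 \<ge> 0" using n by simp_all
  then have "n / 2 + 1 > 0" "(n + 1) / 2 + 1 > 0" by linarith+
  then have G1: "Gamma (n / 2 + 1) > 0" and G2: "Gamma ((n + 1) / 2 + 1) > 0" by simp_all
  have pp: "pi powr (n / 2) > 0" by simp
  have sp: "sqrt pi > 0" "sqrt pi * sqrt pi = pi" by simp_all
  show ?thesis unfolding unit_ball_vol_def p g1 g2 using G1 G2 pp sp
    by (simp add: field_simps)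
qed

theorem proposition5:
  fixes M :: "'s measure" and X U :: "'s \<Rightarrow> 'a::euclidean_space"
  assumes "prob_space M"
    and "X \<in> borel_measurable M" and "U \<in> borel_measurable M"
    and "distr M borel X = uniform_ball"
    and "distr M borel U = uniform_sphere"
    and "prob_space.indep_var M borel X borel U"
  shows "integrable M (\<lambda>\<omega>. escape_time (X \<omega>) (U \<omega>))
    \<and> (\<integral>\<omega>. escape_time (X \<omega>) (U \<omega>) \<partial>M)
        = 2 / sqrt pi * Gamma ((real DIM('a) + 2) / 2) / Gamma ((real DIM('a) + 3) / 2)"
proof -
  interpret prob_space M by fact
  interpret B: prob_space "uniform_ball :: 'a measure" by (rule ball_prob)
  interpret S: prob_space "uniform_sphere :: 'a measure" by (rule sphere_prob)
  interpret BS: pair_prob_space "uniform_ball :: 'a measure" "uniform_sphere :: 'a measure" ..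
  define K where "K = 2 * unit_ball_vol (real DIM('a) + 1) / (pi * unit_ball_vol (real DIM('a)))"
  have K0: "K \<ge> 0" unfolding K_def by simp
  have XU[measurable]: "X \<in> measurable M borel" "U \<in> measurable M borel" using assms(2,3) by auto
  have pair: "(\<lambda>\<omega>. (X \<omega>, U \<omega>)) \<in> measurable M (borel \<Otimes>\<^sub>M borel)" by measurable
  have Tm: "(\<lambda>p. ennreal (escape_time (fst p) (snd p))) \<in> borel_measurable (borel \<Otimes>\<^sub>M borel :: ('a \<times> 'a) measure)"
    by measurable
  have Tm2: "(\<lambda>p. ennreal (escape_time (fst p) (snd p))) \<in> borel_measurable (uniform_ball \<Otimes>\<^sub>M uniform_sphere :: ('a \<times> 'a) measure)"
    using Tm by (simp add: measurable_cong_sets[OF sets_pair_measure_cong[OF sets_uniform_ball sets_uniform_sphere] refl])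
  have joint: "distr M (borel \<Otimes>\<^sub>M borel) (\<lambda>\<omega>. (X \<omega>, U \<omega>)) = uniform_ball \<Otimes>\<^sub>M uniform_sphere"
    using assms(6) assms(4,5) by (simp add: indep_var_distribution_eq)
  have "(\<integral>\<^sup>+\<omega>. ennreal (escape_time (X \<omega>) (U \<omega>)) \<partial>M)
      = (\<integral>\<^sup>+p. ennreal (escape_time (fst p) (snd p)) \<partial>distr M (borel \<Otimes>\<^sub>M borel) (\<lambda>\<omega>. (X \<omega>, U \<omega>)))"
    using nn_integral_distr[OF pair, of "\<lambda>p. ennreal (escape_time (fst p) (snd p))"] Tm by simp
  also have "\<dots> = (\<integral>\<^sup>+p. ennreal (escape_time (fst p) (snd p)) \<partial>(uniform_ball \<Otimes>\<^sub>M uniform_sphere :: ('a \<times> 'a) measure))"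
    using joint by simp
  also have "\<dots> = (\<integral>\<^sup>+u. (\<integral>\<^sup>+x. ennreal (escape_time x u) \<partial>uniform_ball) \<partial>(uniform_sphere :: 'a measure))"
    using BS.nn_integral_snd[OF Tm2] by simp
  also have "\<dots> = (\<integral>\<^sup>+u. ennreal K \<partial>(uniform_sphere :: 'a measure))"
    using AE_sphere by (intro nn_integral_cong_AE) (auto simp: K_def ball_integral elim!: AE_mp)
  also have "\<dots> = ennreal K" by (simp add: S.emeasure_space_1)
  finally have nn: "(\<integral>\<^sup>+\<omega>. ennreal (escape_time (X \<omega>) (U \<omega>)) \<partial>M) = ennreal K" .
  have fm: "(\<lambda>\<omega>. escape_time (X \<omega>) (U \<omega>)) \<in> borel_measurable M"
    using measurable_comp[OF pair escape_measurable] by (simp add: comp_def)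
  have "AE \<omega> in M. norm (U \<omega>) = 1"
    using AE_sphere[where 'a='a] unfolding assms(5)[symmetric]
    by (subst (asm) AE_distr_iff) auto
  then have nonneg: "AE \<omega> in M. 0 \<le> escape_time (X \<omega>) (U \<omega>)"
    by eventually_elim (rule escape_nonneg, auto)
  have hb: "has_bochner_integral M (\<lambda>\<omega>. escape_time (X \<omega>) (U \<omega>)) K"
    by (rule has_bochner_integral_nn_integral[OF fm nonneg K0 nn])
  have "K = 2 / sqrt pi * Gamma ((real DIM('a) + 2) / 2) / Gamma ((real DIM('a) + 3) / 2)"
    unfolding K_def by (rule final_arith) simp
  moreover have "integrable M (\<lambda>\<omega>. escape_time (X \<omega>) (U \<omega>))"
    using hb by (rule integrable.intros)
  moreover have "(\<integral>\<omega>. escape_time (X \<omega>) (U \<omega>) \<partial>M) = K"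
    using hb by (rule has_bochner_integral_integral_eq)
  ultimately show ?thesis by simp
qed

end
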